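(* Consider an instance of the bicriteria asymmetric traveling salesman problem (bi-ATSP) with tour set $\mathcal{C}$, vector criterion $D=(D_1,D_2)$, outcome set $\mathcal{D}=D(\mathcal{C})$, and $\mathcal{D}_i=D_i(\mathcal{C})$ for $i=1,2$. Suppose that $$P(\mathcal{D}) = \bigcup_{i=1}^p \{ (y_1, y_2): y_2 = a_i - k y_1,\ y_1 \in \mathcal{D}_1,\ y_2 \in \mathcal{D}_2 \},$$ where $a_1,\dots,a_p>0$ and $k>0$ are constants. If criterion $D_1$ is more important than criterion $D_2$ with coefficient of relative importance $\theta'$ and $\theta' \geqslant k/(k+1)$ (and $\hat P(\mathcal{D})$ is the reduced Pareto set with $i=1$, $j=2$, $\theta=\theta'$), or criterion $D_2$ is more important than criterion $D_1$ with coefficient of relative importance $\theta''$ and $\theta'' \geqslant 1/(k+1)$ (and $\hat P(\mathcal{D})$ is the reduced Pareto set with $i=2$, $j=1$, $\theta=\theta''$), then $|\hat{P}(\mathcal{D})| \leqslant p$.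
   Context: Bi-ATSP: given a complete directed graph $G=(V,E)$ on $n$ vertices, each arc $e\in E$ carries a weight vector $d(e)=(d_1(e),d_2(e))$ of positive numbers. $\mathcal{C}$ is the set of all $(n-1)!$ Hamiltonian circuits (tours) of $G$, and for a tour $C$, $D(C)=(D_1(C),D_2(C))$ with $D_j(C)=\sum_{e\in C} d_j(e)$. For vectors $y^*,y$, write $y^*\leq y$ if $y^*\neq y$ and $y^*_s\leqslant y_s$ for every coordinate $s$ (Pareto relation). For a vector criterion $F$ on $\mathcal{C}$, the set of pareto-optimal tours is $P_F(\mathcal{C})=\{C\in\mathcal{C}: \nexists C^*\in\mathcal{C},\ F(C^* )\leq F(C)\}$. The Pareto set is $P(\mathcal{D})=\{y\in\mathcal{D}: \nexists y^*\in\mathcal{D},\ y^*\leq y\}$. Reduced Pareto set: if criterion $D_i$ is declared more important than criterion $D_j$ ($\{i,j\}=\{1,2\}$) with coefficient of relative importance $\theta\in(0,1)$, define the new criterion $\hat D$ by $\hat D_j=\theta D_i+(1-\theta)D_j$ and $\hat D_i=D_i$, and set $\hat{P}(\mathcal{D})=D(P_{\hat D}(\mathcal{C}))$ (a subset of $P(\mathcal{D})$). *)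

theory Defs
  imports Complex_Main
begin

definition circuit_arcs :: "'v list \<Rightarrow> ('v \<times> 'v) set" where
  "circuit_arcs vs = {(vs ! i, vs ! ((i + 1) mod length vs)) | i. i < length vs}"

text \<open>All Hamiltonian circuits (tours) of the complete digraph on vertex set V, as arc sets.\<close>
definition tours :: "'v set \<Rightarrow> ('v \<times> 'v) set set" where
  "tours V = {circuit_arcs vs | vs. distinct vs \<and> set vs = V}"

definition tour_weight :: "('v \<times> 'v \<Rightarrow> real) \<Rightarrow> ('v \<times> 'v) set \<Rightarrow> real" where
  "tour_weight w C = (\<Sum>e\<in>C. w e)"

definition pareto_less :: "real \<times> real \<Rightarrow> real \<times> real \<Rightarrow> bool" where
  "pareto_less y' y \<longleftrightarrow> y' \<noteq> y \<and> fst y' \<le> fst y \<and> snd y' \<le> snd y"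

definition pareto_set :: "(real \<times> real) set \<Rightarrow> (real \<times> real) set" where
  "pareto_set Y = {y \<in> Y. \<not> (\<exists>y'\<in>Y. pareto_less y' y)}"

definition pareto_opt :: "('c \<Rightarrow> real \<times> real) \<Rightarrow> 'c set \<Rightarrow> 'c set" where
  "pareto_opt F Cs = {C \<in> Cs. \<not> (\<exists>C'\<in>Cs. pareto_less (F C') (F C))}"

text \<open>Reduced Pareto set when criterion 1 is more important than criterion 2 (coefficient \<theta>).\<close>
definition reduced_pareto_1 ::
  "('c \<Rightarrow> real) \<Rightarrow> ('c \<Rightarrow> real) \<Rightarrow> real \<Rightarrow> 'c set \<Rightarrow> (real \<times> real) set" where
  "reduced_pareto_1 D1 D2 \<theta> Cs =
     (\<lambda>C. (D1 C, D2 C)) ` pareto_opt (\<lambda>C. (D1 C, \<theta> * D1 C + (1 - \<theta>) * D2 C)) Cs"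

text \<open>Reduced Pareto set when criterion 2 is more important than criterion 1 (coefficient \<theta>).\<close>
definition reduced_pareto_2 ::
  "('c \<Rightarrow> real) \<Rightarrow> ('c \<Rightarrow> real) \<Rightarrow> real \<Rightarrow> 'c set \<Rightarrow> (real \<times> real) set" where
  "reduced_pareto_2 D1 D2 \<theta> Cs =
     (\<lambda>C. (D1 C, D2 C)) ` pareto_opt (\<lambda>C. (\<theta> * D2 C + (1 - \<theta>) * D1 C, D2 C)) Cs"

end

theory Submission
  imports Defs
begin

lemma red1_sub:
  assumes "0 < \<theta>" "\<theta> < 1"
  shows "reduced_pareto_1 f g \<theta> Cs \<subseteq> pareto_set ((\<lambda>C. (f C, g C)) ` Cs)"
proof
  fix y assume "y \<in> reduced_pareto_1 f g \<theta> Cs"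
  then obtain C where C: "C \<in> pareto_opt (\<lambda>C. (f C, \<theta> * f C + (1 - \<theta>) * g C)) Cs" and y: "y = (f C, g C)"
    unfolding reduced_pareto_1_def by auto
  show "y \<in> pareto_set ((\<lambda>C. (f C, g C)) ` Cs)"
  proof (rule ccontr)
    assume "y \<notin> pareto_set ((\<lambda>C. (f C, g C)) ` Cs)"
    then obtain C' where C': "C' \<in> Cs" "pareto_less (f C', g C') (f C, g C)"
      using C y unfolding pareto_set_def pareto_opt_def by auto
    have "g C' \<le> g C" using C' by (simp add: pareto_less_def)
    hence "(1 - \<theta>) * g C' \<le> (1 - \<theta>) * g C" using assms by simp
    moreover have "(f C', \<theta> * f C' + (1 - \<theta>) * g C') \<noteq> (f C, \<theta> * f C + (1 - \<theta>) * g C)"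
      using C' assms by (auto simp: pareto_less_def)
    ultimately have "pareto_less (f C', \<theta> * f C' + (1 - \<theta>) * g C') (f C, \<theta> * f C + (1 - \<theta>) * g C)"
      using C' assms unfolding pareto_less_def by (auto intro: add_mono mult_left_mono)
    thus False using C C' unfolding pareto_opt_def by auto
  qed
qed

lemma red2_sub:
  assumes "0 < \<theta>" "\<theta> < 1"
  shows "reduced_pareto_2 f g \<theta> Cs \<subseteq> pareto_set ((\<lambda>C. (f C, g C)) ` Cs)"
proof
  fix y assume "y \<in> reduced_pareto_2 f g \<theta> Cs"
  then obtain C where C: "C \<in> pareto_opt (\<lambda>C. (\<theta> * g C + (1 - \<theta>) * f C, g C)) Cs" and y: "y = (f C, g C)"
    unfolding reduced_pareto_2_def by auto
  show "y \<in> pareto_set ((\<lambda>C. (f C, g C)) ` Cs)"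
  proof (rule ccontr)
    assume "y \<notin> pareto_set ((\<lambda>C. (f C, g C)) ` Cs)"
    then obtain C' where C': "C' \<in> Cs" "pareto_less (f C', g C') (f C, g C)"
      using C y unfolding pareto_set_def pareto_opt_def by auto
    have "f C' \<le> f C" using C' by (simp add: pareto_less_def)
    hence "(1 - \<theta>) * f C' \<le> (1 - \<theta>) * f C" using assms by simp
    moreover have "(\<theta> * g C' + (1 - \<theta>) * f C', g C') \<noteq> (\<theta> * g C + (1 - \<theta>) * f C, g C)"
      using C' assms by (auto simp: pareto_less_def)
    ultimately have "pareto_less (\<theta> * g C' + (1 - \<theta>) * f C', g C') (\<theta> * g C + (1 - \<theta>) * f C, g C)"
      using C' assms unfolding pareto_less_def by (auto intro: add_mono mult_left_mono)
    thus False using C C' unfolding pareto_opt_def by auto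
  qed
qed

lemma card_le_lines:
  fixes R :: "(real \<times> real) set"
  assumes sub: "\<And>y. y \<in> R \<Longrightarrow> \<exists>i\<in>{1..p}. snd y = a i - k * fst y"
    and same: "\<And>y y' i. y \<in> R \<Longrightarrow> y' \<in> R \<Longrightarrow> snd y = a i - k * fst y
                 \<Longrightarrow> snd y' = a i - k * fst y' \<Longrightarrow> fst y = fst y'"
  shows "card R \<le> p"
proof -
  define idx where "idx y = (SOME i. i \<in> {1..p} \<and> snd y = a i - k * fst y)" for y
  have idx: "idx y \<in> {1..p} \<and> snd y = a (idx y) - k * fst y" if "y \<in> R" for y
    using sub[OF that] unfolding idx_def by (metis (mono_tags, lifting) someI_ex)
  have "inj_on idx R"
  proof (rule inj_onI)
    fix y y' assume h: "y \<in> R" "y' \<in> R" "idx y = idx y'"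
    have "fst y = fst y'" using same[OF h(1,2)] idx[OF h(1)] idx[OF h(2)] h(3) by metis
    moreover have "snd y = snd y'" using calculation idx[OF h(1)] idx[OF h(2)] h(3) by simp
    ultimately show "y = y'" by (simp add: prod_eq_iff)
  qed
  moreover have "idx ` R \<subseteq> {1..p}" using idx by auto
  ultimately have "card R \<le> card {1..p}" by (intro card_inj_on_le) auto
  thus ?thesis by simp
qed

theorem corollary1:
  fixes V :: "'v set" and d1 d2 :: "'v \<times> 'v \<Rightarrow> real"
    and p :: nat and a :: "nat \<Rightarrow> real" and k \<theta>' \<theta>'' :: real
  assumes "finite V" and "card V \<ge> 2"
    and "\<And>x y. x \<in> V \<Longrightarrow> y \<in> V \<Longrightarrow> x \<noteq> y \<Longrightarrow> d1 (x, y) > 0"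
    and "\<And>x y. x \<in> V \<Longrightarrow> y \<in> V \<Longrightarrow> x \<noteq> y \<Longrightarrow> d2 (x, y) > 0"
    and "\<And>i. i \<in> {1..p} \<Longrightarrow> a i > 0" and "k > 0"
    and "pareto_set ((\<lambda>C. (tour_weight d1 C, tour_weight d2 C)) ` tours V) =
           (\<Union>i\<in>{1..p}. {(y1, y2). y2 = a i - k * y1
                                 \<and> y1 \<in> tour_weight d1 ` tours V
                                 \<and> y2 \<in> tour_weight d2 ` tours V})"
  shows "(0 < \<theta>' \<and> \<theta>' < 1 \<and> \<theta>' \<ge> k / (k + 1) \<longrightarrow>
            card (reduced_pareto_1 (tour_weight d1) (tour_weight d2) \<theta>' (tours V)) \<le> p)
       \<and> (0 < \<theta>'' \<and> \<theta>'' < 1 \<and> \<theta>'' \<ge> 1 / (k + 1) \<longrightarrow>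
            card (reduced_pareto_2 (tour_weight d1) (tour_weight d2) \<theta>'' (tours V)) \<le> p)"
proof (intro conjI impI)
  let ?f = "tour_weight d1" and ?g = "tour_weight d2" and ?Cs = "tours V"
  have lines: "\<exists>i\<in>{1..p}. snd y = a i - k * fst y"
    if "y \<in> pareto_set ((\<lambda>C. (?f C, ?g C)) ` ?Cs)" for y
  proof -
    from that obtain i where "i \<in> {1..p}" "snd y = a i - k * fst y"
      using assms(7) by auto
    thus ?thesis by blast
  qed
  assume h: "0 < \<theta>' \<and> \<theta>' < 1 \<and> \<theta>' \<ge> k / (k + 1)"
  have c: "\<theta>' - (1 - \<theta>') * k \<ge> 0"
  proof -
    have "\<theta>' * (k + 1) \<ge> k" using h assms(6) by (simp add: field_simps)
    thus ?thesis by (simp add: algebra_simps)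
  qed
  show "card (reduced_pareto_1 ?f ?g \<theta>' ?Cs) \<le> p"
  proof (rule card_le_lines)
    fix y assume "y \<in> reduced_pareto_1 ?f ?g \<theta>' ?Cs"
    thus "\<exists>i\<in>{1..p}. snd y = a i - k * fst y" using red1_sub h lines by blast
  next
    fix y y' i
    assume y: "y \<in> reduced_pareto_1 ?f ?g \<theta>' ?Cs" and y': "y' \<in> reduced_pareto_1 ?f ?g \<theta>' ?Cs"
      and l: "snd y = a i - k * fst y" and l': "snd y' = a i - k * fst y'"
    have dom: False if A: "u \<in> reduced_pareto_1 ?f ?g \<theta>' ?Cs" "v \<in> reduced_pareto_1 ?f ?g \<theta>' ?Cs"
      "snd u = a i - k * fst u" "snd v = a i - k * fst v" "fst u < fst v" for u v
    proof -
      obtain C where C: "C \<in> pareto_opt (\<lambda>C. (?f C, \<theta>' * ?f C + (1 - \<theta>') * ?g C)) ?Cs" "u = (?f C, ?g C)"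
        using A(1) unfolding reduced_pareto_1_def by auto
      obtain C' where C': "C' \<in> pareto_opt (\<lambda>C. (?f C, \<theta>' * ?f C + (1 - \<theta>') * ?g C)) ?Cs" "v = (?f C', ?g C')"
        using A(2) unfolding reduced_pareto_1_def by auto
      have e1: "\<theta>' * ?f C + (1 - \<theta>') * ?g C = (1 - \<theta>') * a i + (\<theta>' - (1 - \<theta>') * k) * ?f C"
      proof -
        have gq: "?g C = a i - k * ?f C" using A(3) C(2) by simp
        show ?thesis unfolding gq by (simp add: algebra_simps)
      qed
      have e2: "\<theta>' * ?f C' + (1 - \<theta>') * ?g C' = (1 - \<theta>') * a i + (\<theta>' - (1 - \<theta>') * k) * ?f C'"
      proof -
        have gq: "?g C' = a i - k * ?f C'" using A(4) C'(2) by simp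
        show ?thesis unfolding gq by (simp add: algebra_simps)
      qed
      have "(\<theta>' - (1 - \<theta>') * k) * ?f C \<le> (\<theta>' - (1 - \<theta>') * k) * ?f C'"
        using c A(5) C(2) C'(2) by (intro mult_left_mono) auto
      hence "pareto_less (?f C, \<theta>' * ?f C + (1 - \<theta>') * ?g C) (?f C', \<theta>' * ?f C' + (1 - \<theta>') * ?g C')"
        unfolding pareto_less_def using e1 e2 A(5) C(2) C'(2) by auto
      thus False using C(1) C'(1) unfolding pareto_opt_def by auto
    qed
    show "fst y = fst y'"
      using dom[OF y y' l l'] dom[OF y' y l' l] by (meson linorder_neqE)
  qed
next
  let ?f = "tour_weight d1" and ?g = "tour_weight d2" and ?Cs = "tours V"
  have lines: "\<exists>i\<in>{1..p}. snd y = a i - k * fst y"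
    if "y \<in> pareto_set ((\<lambda>C. (?f C, ?g C)) ` ?Cs)" for y
  proof -
    from that obtain i where "i \<in> {1..p}" "snd y = a i - k * fst y"
      using assms(7) by auto
    thus ?thesis by blast
  qed
  assume h: "0 < \<theta>'' \<and> \<theta>'' < 1 \<and> \<theta>'' \<ge> 1 / (k + 1)"
  have c: "\<theta>'' * k - (1 - \<theta>'') \<ge> 0"
  proof -
    have "\<theta>'' * (k + 1) \<ge> 1" using h assms(6) by (simp add: field_simps)
    thus ?thesis by (simp add: algebra_simps)
  qed
  show "card (reduced_pareto_2 ?f ?g \<theta>'' ?Cs) \<le> p"
  proof (rule card_le_lines)
    fix y assume "y \<in> reduced_pareto_2 ?f ?g \<theta>'' ?Cs"
    thus "\<exists>i\<in>{1..p}. snd y = a i - k * fst y" using red2_sub h lines by blast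
  next
    fix y y' i
    assume y: "y \<in> reduced_pareto_2 ?f ?g \<theta>'' ?Cs" and y': "y' \<in> reduced_pareto_2 ?f ?g \<theta>'' ?Cs"
      and l: "snd y = a i - k * fst y" and l': "snd y' = a i - k * fst y'"
    have dom: False if A: "u \<in> reduced_pareto_2 ?f ?g \<theta>'' ?Cs" "v \<in> reduced_pareto_2 ?f ?g \<theta>'' ?Cs"
      "snd u = a i - k * fst u" "snd v = a i - k * fst v" "fst u > fst v" for u v
    proof -
      obtain C where C: "C \<in> pareto_opt (\<lambda>C. (\<theta>'' * ?g C + (1 - \<theta>'') * ?f C, ?g C)) ?Cs" "u = (?f C, ?g C)"
        using A(1) unfolding reduced_pareto_2_def by auto
      obtain C' where C': "C' \<in> pareto_opt (\<lambda>C. (\<theta>'' * ?g C + (1 - \<theta>'') * ?f C, ?g C)) ?Cs" "v = (?f C', ?g C')"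
        using A(2) unfolding reduced_pareto_2_def by auto
      have e1: "\<theta>'' * ?g C + (1 - \<theta>'') * ?f C = \<theta>'' * a i - (\<theta>'' * k - (1 - \<theta>'')) * ?f C"
      proof -
        have gq: "?g C = a i - k * ?f C" using A(3) C(2) by simp
        show ?thesis unfolding gq by (simp add: algebra_simps)
      qed
      have e2: "\<theta>'' * ?g C' + (1 - \<theta>'') * ?f C' = \<theta>'' * a i - (\<theta>'' * k - (1 - \<theta>'')) * ?f C'"
      proof -
        have gq: "?g C' = a i - k * ?f C'" using A(4) C'(2) by simp
        show ?thesis unfolding gq by (simp add: algebra_simps)
      qed
      have "(\<theta>'' * k - (1 - \<theta>'')) * ?f C' \<le> (\<theta>'' * k - (1 - \<theta>'')) * ?f C"
        using c A(5) C(2) C'(2) by (intro mult_left_mono) auto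
      moreover have "?g C < ?g C'" using A(3,4,5) C(2) C'(2) assms(6) by simp
      ultimately have "pareto_less (\<theta>'' * ?g C + (1 - \<theta>'') * ?f C, ?g C) (\<theta>'' * ?g C' + (1 - \<theta>'') * ?f C', ?g C')"
        unfolding pareto_less_def using e1 e2 by auto
      thus False using C(1) C'(1) unfolding pareto_opt_def by auto
    qed
    show "fst y = fst y'"
      using dom[OF y y' l l'] dom[OF y' y l' l] by (meson linorder_neqE)
  qed
qed

end
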